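(* Consider $n$ agents over a fixed directed graph with nonnegative weights $a_{ij}$ ($a_{ij}>0$ iff $j\in N_i$) that has a spanning tree, with Laplacian $L$ whose eigenvalues are $\lambda_1(L)=0$ (simple) and $\lambda_2(L),\dots,\lambda_n(L)$ (positive real parts). Let $0<h<\min_{2\le i\le n}\frac{2\,\mathrm{Re}(\lambda_i(L))}{|\lambda_i(L)|^2}$. The states $x_i(t)\in\mathbb{R}^m$ evolve by $x_i(t+1)=x_i(t)+u_i(t)$ with $$y_i(t)=x_i(t)+h\sum_{j\in N_i}a_{ij}(x_j(t)-x_i(t)),\ \nabla_i(t)=\beta(t)\nabla g_i^+(y_i(t)),\ \xi_i(t)=y_i(t)-\nabla_i(t),$$ $$\varphi_i(t)=\alpha(t)\big(\xi_i(t)-P_{X_i}(\xi_i(t))\big),\ \phi_i(t)=-\nabla_i(t)-\varphi_i(t),\ u_i(t)=h\sum_{j\in N_i}a_{ij}(x_j(t)-x_i(t))+\phi_i(t),$$ for given real sequences $\alpha(t),\beta(t)$. If $\lim_{t\to\infty}\phi_i(t)=0$ for every $i$, then the agents reach consensus asymptotically, i.e. $\lim_{t\to\infty}\|x_i(t)-x_j(t)\|=0$ for all $i,j$.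
   Context: $g_i:\mathbb{R}^m\to\mathbb{R}$ convex continuous, $X_i\subset\mathbb{R}^m$ closed convex, $g_i^+=\max[g_i,0]$, $\nabla g_i^+(y)$ a subgradient of $g_i^+$ at $y$, $P_{X_i}$ Euclidean projection onto $X_i$. Laplacian $L=(l_{ij})$: $l_{ij}=-a_{ij}$ for $i\neq j$, $l_{ii}=\sum_j a_{ij}$. A spanning tree is a subset of edges forming a directed tree that connects all nodes. *)

theory Defs
  imports "HOL-Analysis.Analysis"
begin

text \<open>Agents are indexed by a finite type 'n; a i j is the weight a_ij
 (agent i receives information from agent j, i.e. directed edge j -> i).\<close>

definition neighbors :: "('n \<Rightarrow> 'n \<Rightarrow> real) \<Rightarrow> 'n \<Rightarrow> 'n set" where
  "neighbors a i = {j. a i j > 0}"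

definition graph_edges :: "('n \<Rightarrow> 'n \<Rightarrow> real) \<Rightarrow> ('n \<times> 'n) set" where
  "graph_edges a = {(j, i). a i j > 0}"

definition has_spanning_tree :: "('n \<Rightarrow> 'n \<Rightarrow> real) \<Rightarrow> bool" where
  "has_spanning_tree a \<longleftrightarrow> (\<exists>T r. T \<subseteq> graph_edges a \<and>
      (\<forall>j. (j, r) \<notin> T) \<and>
      (\<forall>i. i \<noteq> r \<longrightarrow> (\<exists>!j. (j, i) \<in> T)) \<and>
      (\<forall>i. (r, i) \<in> T\<^sup>*))"

definition laplacian :: "('n::finite \<Rightarrow> 'n \<Rightarrow> real) \<Rightarrow> real^'n^'n" where
  "laplacian a = (\<chi> i j. if i = j then (\<Sum>k\<in>UNIV. a i k) else - a i j)"

definition cmat_eigenvalue :: "real^'n^'n \<Rightarrow> complex \<Rightarrow> bool" where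
  "cmat_eigenvalue A c \<longleftrightarrow>
     (\<exists>v::complex^'n. v \<noteq> 0 \<and> (\<chi> i j. complex_of_real (A $ i $ j)) *v v = c *s v)"

definition gplus :: "('a \<Rightarrow> real) \<Rightarrow> 'a \<Rightarrow> real" where
  "gplus g y = max (g y) 0"

definition is_subgradient :: "('a::real_inner \<Rightarrow> real) \<Rightarrow> 'a \<Rightarrow> 'a \<Rightarrow> bool" where
  "is_subgradient f y d \<longleftrightarrow> (\<forall>z. f z \<ge> f y + d \<bullet> (z - y))"

end

theory Submission
  imports Defs "Jordan_Normal_Form.Spectral_Radius"
begin

lemma smult_smult_mat': "a \<cdot>\<^sub>m (b \<cdot>\<^sub>m A) = (a * b) \<cdot>\<^sub>m (A :: 'a::comm_ring_1 mat)"
  by (rule eq_matI) (auto simp: mult.assoc)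

lemma one_smult_mat': "(1::'a::comm_ring_1) \<cdot>\<^sub>m A = A"
  by (rule eq_matI) auto

lemma pow_smult_mat':
  assumes A: "(A :: 'a::comm_ring_1 mat) \<in> carrier_mat n n"
  shows "(a \<cdot>\<^sub>m A) ^\<^sub>m k = a ^ k \<cdot>\<^sub>m A ^\<^sub>m k"
proof (induction k)
  case 0
  then show ?case using A by (simp add: one_smult_mat')
next
  case (Suc k)
  have "(a \<cdot>\<^sub>m A) ^\<^sub>m Suc k = (a ^ k \<cdot>\<^sub>m A ^\<^sub>m k) * (a \<cdot>\<^sub>m A)" using Suc by simp
  also have "\<dots> = a ^ k \<cdot>\<^sub>m (A ^\<^sub>m k * (a \<cdot>\<^sub>m A))"
    using A by (simp add: mult_smult_assoc_mat[where nr=n and n=n and nc=n] pow_carrier_mat)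
  also have "\<dots> = a ^ k \<cdot>\<^sub>m (a \<cdot>\<^sub>m (A ^\<^sub>m k * A))"
    using A by (simp add: mult_smult_distrib[where nr=n and n=n and nc=n] pow_carrier_mat)
  also have "\<dots> = a ^ Suc k \<cdot>\<^sub>m A ^\<^sub>m Suc k"
    by (simp add: smult_smult_mat' mult.commute)
  finally show ?case .
qed

lemma smult_mat_mult_vec':
  assumes "(A :: 'a::comm_ring_1 mat) \<in> carrier_mat n n" "v \<in> carrier_vec n"
  shows "(a \<cdot>\<^sub>m A) *\<^sub>v v = a \<cdot>\<^sub>v (A *\<^sub>v v)"
  using assms by (intro eq_vecI) (auto simp: scalar_prod_def sum_distrib_left mult.assoc)

lemma spectral_radius_nonneg':
  assumes A: "(A :: complex mat) \<in> carrier_mat n n" and n: "n > 0"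
  shows "spectral_radius A \<ge> 0"
  using spectral_radius_mem_max(1)[OF A n] by auto

lemma pow_decay:
  assumes A: "(A :: complex mat) \<in> carrier_mat n n" and n: "n > 0"
    and sr: "spectral_radius A < 1"
  shows "\<exists>c r. 0 \<le> c \<and> 0 < r \<and> r < 1 \<and>
           (\<forall>k i j. i < n \<longrightarrow> j < n \<longrightarrow> cmod ((A ^\<^sub>m k) $$ (i,j)) \<le> c * r ^ k)"
proof -
  define \<rho> where "\<rho> = spectral_radius A"
  have \<rho>0: "\<rho> \<ge> 0" using spectral_radius_nonneg'[OF A n] by (simp add: \<rho>_def)
  define r where "r = (1 + \<rho>) / 2"
  have r0: "r > 0" and r1: "r < 1" and r\<rho>: "\<rho> < r" using \<rho>0 sr by (auto simp: r_def \<rho>_def)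
  define B where "B = complex_of_real (1 / r) \<cdot>\<^sub>m A"
  have B: "B \<in> carrier_mat n n" using A by (simp add: B_def)
  have AB: "A = complex_of_real r \<cdot>\<^sub>m B"
    using r0 by (simp add: B_def smult_smult_mat' one_smult_mat' flip: of_real_mult)
  have "spectral_radius B < 1"
  proof -
    obtain \<nu> where nu: "\<nu> \<in> spectrum B" and eq: "spectral_radius B = cmod \<nu>"
      using spectral_radius_mem_max(1)[OF B n] by auto
    from nu obtain v where v: "v \<in> carrier_vec n" "v \<noteq> 0\<^sub>v n" "B *\<^sub>v v = \<nu> \<cdot>\<^sub>v v"
      using B unfolding spectrum_def eigenvalue_def eigenvector_def by auto
    have "A *\<^sub>v v = (complex_of_real r * \<nu>) \<cdot>\<^sub>v v"
      unfolding AB using smult_mat_mult_vec'[OF B v(1)] v(3) by (simp add: smult_smult_assoc)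
    then have "complex_of_real r * \<nu> \<in> spectrum A"
      using v A unfolding spectrum_def eigenvalue_def eigenvector_def by auto
    then have "cmod (complex_of_real r * \<nu>) \<le> \<rho>"
      using spectral_radius_mem_max(2)[OF A n] by (auto simp: \<rho>_def)
    then have "r * cmod \<nu> \<le> \<rho>" using r0 by (simp add: norm_mult)
    then have "r * cmod \<nu> < r * 1" using r\<rho> by simp
    then show ?thesis using r0 eq by simp
  qed
  from spectral_radius_jnf_norm_bound_less_1_upper_triangular[OF B this]
  obtain c where c: "\<And>k. norm_bound (B ^\<^sub>m k) c" by auto
  have c0: "c \<ge> 0"
    using c[of 0] n B unfolding norm_bound_def by (auto elim!: allE[of _ 0] intro: order_trans[OF norm_ge_zero])
  have bnd: "\<forall>k i j. i < n \<longrightarrow> j < n \<longrightarrow> cmod ((A ^\<^sub>m k) $$ (i,j)) \<le> c * r ^ k"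
  proof (intro allI impI)
    fix k i j assume ij: "i < n" "j < n"
    have "(A ^\<^sub>m k) $$ (i,j) = complex_of_real r ^ k * (B ^\<^sub>m k) $$ (i,j)"
      unfolding AB pow_smult_mat'[OF B] using ij B pow_carrier_mat[OF B] by auto
    moreover have "cmod ((B ^\<^sub>m k) $$ (i,j)) \<le> c"
      using c[of k] ij B unfolding norm_bound_def by auto
    ultimately show "cmod ((A ^\<^sub>m k) $$ (i,j)) \<le> c * r ^ k"
      using r0 by (simp add: norm_mult norm_power mult.commute mult_left_mono)
  qed
  show ?thesis using bnd c0 r0 r1 by blast
qed


lemma seq_contract:
  fixes \<mu> g :: "nat \<Rightarrow> real"
  assumes nn: "\<And>t. \<mu> t \<ge> 0" and K: "K > 0"
    and step: "\<And>t. \<mu> (t + K) \<le> \<mu> t / 2 + g t" and g: "g \<longlonglongrightarrow> 0"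
  shows "\<mu> \<longlonglongrightarrow> 0"
proof (rule LIMSEQ_I)
  fix \<epsilon> :: real assume \<epsilon>: "\<epsilon> > 0"
  from LIMSEQ_D[OF g, of "\<epsilon>/4"] \<epsilon> obtain T0 where T0: "\<And>t. t \<ge> T0 \<Longrightarrow> norm (g t) < \<epsilon>/4"
    by auto
  define B0 where "B0 = Max ((\<lambda>s. \<mu> (T0 + s)) ` {..<K})"
  have B0: "\<And>s. s < K \<Longrightarrow> \<mu> (T0 + s) \<le> B0" unfolding B0_def by (intro Max_ge) auto
  have B0nn: "B0 \<ge> 0" using B0[of 0] K nn[of T0] by auto
  have ind: "\<mu> (T0 + s + j * K) \<le> \<epsilon>/2 + B0 / 2 ^ j" if "s < K" for s j
  proof (induction j)
    case 0
    then show ?case using B0[OF that] \<epsilon> by simp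
  next
    case (Suc j)
    have "\<mu> (T0 + s + Suc j * K) = \<mu> ((T0 + s + j * K) + K)" by (simp add: algebra_simps)
    also have "\<dots> \<le> \<mu> (T0 + s + j * K) / 2 + g (T0 + s + j * K)" by (rule step)
    also have "\<dots> \<le> (\<epsilon>/2 + B0 / 2 ^ j) / 2 + \<epsilon>/4"
      proof -
      have "g (T0 + s + j * K) \<le> \<epsilon>/4" using T0[of "T0 + s + j * K"] by auto
      moreover have "\<mu> (T0 + s + j * K) / 2 \<le> (\<epsilon>/2 + B0 / 2 ^ j) / 2"
        using Suc by (intro divide_right_mono) auto
      ultimately show ?thesis by linarith
    qed
    also have "\<dots> = \<epsilon>/2 + B0 / 2 ^ Suc j" by (simp add: field_simps)
    finally show ?case .
  qed
  have "(\<lambda>j. B0 / 2 ^ j) \<longlonglongrightarrow> 0"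
    by (intro LIMSEQ_divide_realpow_zero) auto
  from LIMSEQ_D[OF this, of "\<epsilon>/2"] \<epsilon> obtain J where J: "\<And>j. j \<ge> J \<Longrightarrow> norm (B0 / 2 ^ j) < \<epsilon>/2"
    by auto
  show "\<exists>no. \<forall>t\<ge>no. norm (\<mu> t - 0) < \<epsilon>"
  proof (intro exI allI impI)
    fix t assume t: "t \<ge> T0 + J * K"
    define s where "s = (t - T0) mod K"
    define j where "j = (t - T0) div K"
    have s: "s < K" using K by (simp add: s_def)
    have teq: "t = T0 + s + j * K" using t by (simp add: s_def j_def)
    have "J * K \<le> t - T0" using t by simp
    then have "J \<le> j" unfolding j_def using K by (simp add: less_eq_div_iff_mult_less_eq)
    then have "B0 / 2 ^ j < \<epsilon>/2" using J[of j] B0nn by simp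
    then have "\<mu> (T0 + s + j * K) < \<epsilon>" using ind[OF s, of j] by linarith
    then have "\<mu> t < \<epsilon>" using teq by simp
    then show "norm (\<mu> t - 0) < \<epsilon>" using nn[of t] by simp
  qed
qed


definition l1n :: "nat \<Rightarrow> complex Matrix.vec \<Rightarrow> real" where
  "l1n n v = (\<Sum>i<n. cmod (vec_index v i))"

lemma l1n_nonneg: "l1n n v \<ge> 0"
  unfolding l1n_def by (intro sum_nonneg) auto

lemma l1n_tri:
  assumes "\<And>i. i < n \<Longrightarrow> vec_index x i = vec_index y i + vec_index z i"
  shows "l1n n x \<le> l1n n y + l1n n z"
proof -
  have "l1n n x \<le> (\<Sum>i<n. cmod (vec_index y i) + cmod (vec_index z i))"
    unfolding l1n_def using assms by (intro sum_mono) (auto intro: norm_triangle_ineq)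
  then show ?thesis by (simp add: l1n_def sum.distrib)
qed

lemma l1n_mat_vec:
  assumes A: "(A :: complex mat) \<in> carrier_mat n n" and v: "v \<in> carrier_vec n"
    and b: "\<And>i j. i < n \<Longrightarrow> j < n \<Longrightarrow> cmod (A $$ (i,j)) \<le> b"
  shows "l1n n (A *\<^sub>v v) \<le> real n * b * l1n n v"
proof -
  have row: "cmod (vec_index (A *\<^sub>v v) i) \<le> b * l1n n v" if i: "i < n" for i
  proof -
    have "vec_index (A *\<^sub>v v) i = (\<Sum>j<n. A $$ (i,j) * vec_index v j)"
      using A v i by (simp add: scalar_prod_def atLeast0LessThan)
    then have "cmod (vec_index (A *\<^sub>v v) i) \<le> (\<Sum>j<n. cmod (A $$ (i,j)) * cmod (vec_index v j))"
      by (simp add: norm_mult[symmetric] norm_sum)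
    also have "\<dots> \<le> (\<Sum>j<n. b * cmod (vec_index v j))"
      using b i by (intro sum_mono mult_right_mono) auto
    finally show ?thesis by (simp add: l1n_def sum_distrib_left)
  qed
  have "l1n n (A *\<^sub>v v) \<le> (\<Sum>i<n. b * l1n n v)"
    unfolding l1n_def using row by (intro sum_mono) (simp add: l1n_def)
  then show ?thesis by simp
qed

lemma conv_lemma:
  assumes A: "(A :: complex mat) \<in> carrier_mat n n" and n: "n > 0"
    and sr: "spectral_radius A < 1"
    and E: "\<And>t. E t \<in> carrier_vec n" and F: "\<And>t. F t \<in> carrier_vec n"
    and rec: "\<And>t. E (Suc t) = A *\<^sub>v E t + F t"
    and Flim: "(\<lambda>t. l1n n (F t)) \<longlonglongrightarrow> 0"
  shows "(\<lambda>t. l1n n (E t)) \<longlonglongrightarrow> 0"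
proof -
  obtain c r where c0: "0 \<le> c" and r0: "0 < r" and r1: "r < 1"
    and bnd: "\<And>k i j. i < n \<Longrightarrow> j < n \<Longrightarrow> cmod ((A ^\<^sub>m k) $$ (i,j)) \<le> c * r ^ k"
    using pow_decay[OF A n sr] by blast
  have bnd': "cmod ((A ^\<^sub>m k) $$ (i,j)) \<le> c" if "i < n" "j < n" for k i j
  proof -
    have "c * r ^ k \<le> c * 1" using r0 r1 c0 by (intro mult_left_mono power_le_one) auto
    then show ?thesis using bnd[OF that, of k] by simp
  qed
  define D where "D = real n * c"
  have D0: "D \<ge> 0" using c0 by (simp add: D_def)
  have Ak: "\<And>k v. v \<in> carrier_vec n \<Longrightarrow> l1n n (A ^\<^sub>m k *\<^sub>v v) \<le> D * l1n n v"
    unfolding D_def by (rule l1n_mat_vec[OF pow_carrier_mat[OF A]]) (use bnd' in auto)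
  have claim: "l1n n (E (t + k) - A ^\<^sub>m k *\<^sub>v E t) \<le> D * (\<Sum>s<k. l1n n (F (t + s)))" for k t
  proof (induction k arbitrary: t)
    case 0
    have "E t - 1\<^sub>m n *\<^sub>v E t = 0\<^sub>v n" using E[of t] by (simp add: one_mult_mat_vec)
    then show ?case using A by (simp add: l1n_def)
  next
    case (Suc k)
    have AkC: "A ^\<^sub>m k \<in> carrier_mat n n" using pow_carrier_mat[OF A] .
    have eq1: "A ^\<^sub>m Suc k *\<^sub>v E t = A ^\<^sub>m k *\<^sub>v (A *\<^sub>v E t)"
      using A E[of t] AkC by (simp add: assoc_mult_mat_vec[where n\<^sub>1=n and n\<^sub>2=n and n\<^sub>3=n])
    have eq2: "A ^\<^sub>m k *\<^sub>v E (Suc t) = A ^\<^sub>m k *\<^sub>v (A *\<^sub>v E t) + A ^\<^sub>m k *\<^sub>v F t"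
      unfolding rec using A E[of t] F[of t] AkC
      by (simp add: mult_add_distrib_mat_vec[where nr=n and nc=n])
    have "l1n n (E (t + Suc k) - A ^\<^sub>m Suc k *\<^sub>v E t)
        \<le> l1n n (E (Suc t + k) - A ^\<^sub>m k *\<^sub>v E (Suc t)) + l1n n (A ^\<^sub>m k *\<^sub>v F t)"
    proof (rule l1n_tri)
      fix i assume i: "i < n"
      show "vec_index (E (t + Suc k) - A ^\<^sub>m Suc k *\<^sub>v E t) i =
            vec_index (E (Suc t + k) - A ^\<^sub>m k *\<^sub>v E (Suc t)) i + vec_index (A ^\<^sub>m k *\<^sub>v F t) i"
        unfolding eq1 eq2 using i E AkC A F by (simp add: algebra_simps)
    qed
    also have "\<dots> \<le> D * (\<Sum>s<k. l1n n (F (Suc t + s))) + D * l1n n (F t)"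
      using Suc[of "Suc t"] Ak[OF F[of t], of k] by linarith
    also have "\<dots> = D * (\<Sum>s<Suc k. l1n n (F (t + s)))"
      unfolding sum.lessThan_Suc_shift by (simp add: algebra_simps del: sum.lessThan_Suc)
    finally show ?case .
  qed
  have "(\<lambda>K. D * r ^ K) \<longlonglongrightarrow> D * 0"
    by (intro tendsto_mult tendsto_const LIMSEQ_realpow_zero) (use r0 r1 in auto)
  from LIMSEQ_D[OF this, of "1/2"] obtain K0 where K0: "\<And>K. K \<ge> K0 \<Longrightarrow> norm (D * r ^ K) < 1/2"
    by auto
  define K where "K = Suc K0"
  have Kpos: "K > 0" by (simp add: K_def)
  have DK: "real n * (c * r ^ K) \<le> 1/2" using K0[of K] D0 r0 by (simp add: K_def D_def)
  define g where "g t = D * (\<Sum>s<K. l1n n (F (t + s)))" for t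
  have step: "l1n n (E (t + K)) \<le> l1n n (E t) / 2 + g t" for t
  proof -
    have "l1n n (E (t + K)) \<le> l1n n (A ^\<^sub>m K *\<^sub>v E t) + l1n n (E (t + K) - A ^\<^sub>m K *\<^sub>v E t)"
      by (rule l1n_tri) (use E pow_carrier_mat[OF A, of K] in auto)
    moreover have "l1n n (A ^\<^sub>m K *\<^sub>v E t) \<le> real n * (c * r ^ K) * l1n n (E t)"
      by (rule l1n_mat_vec[OF pow_carrier_mat[OF A] E]) (use bnd in auto)
    moreover have "real n * (c * r ^ K) * l1n n (E t) \<le> 1/2 * l1n n (E t)"
      using DK l1n_nonneg by (intro mult_right_mono) auto
    ultimately show ?thesis using claim[of t K] by (simp add: g_def)
  qed
  have glim: "g \<longlonglongrightarrow> 0"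
  proof -
    have "(\<lambda>t. D * (\<Sum>s<K. l1n n (F (t + s)))) \<longlonglongrightarrow> D * (\<Sum>s<K. 0)"
      by (intro tendsto_mult tendsto_const tendsto_sum)
         (use Flim LIMSEQ_ignore_initial_segment in auto)
    then show ?thesis by (simp add: g_def[abs_def])
  qed
  show ?thesis by (rule seq_contract[OF l1n_nonneg Kpos step glim])
qed

definition Lent :: "('n::finite \<Rightarrow> 'n \<Rightarrow> real) \<Rightarrow> 'n \<Rightarrow> 'n \<Rightarrow> real" where
  "Lent a i j = vec_nth (vec_nth (laplacian a) i) j"

lemma Lent_eq: "Lent a i j = (if i = j then (\<Sum>k\<in>UNIV. a i k) else - a i j)"
  by (simp add: Lent_def laplacian_def)

definition Lw :: "('n::finite \<Rightarrow> 'n \<Rightarrow> real) \<Rightarrow> ('n \<Rightarrow> 'b::real_algebra_1) \<Rightarrow> 'n \<Rightarrow> 'b" where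
  "Lw a w i = (\<Sum>j\<in>UNIV. of_real (a i j) * (w i - w j))"

definition Nf :: "('n::finite \<Rightarrow> 'n \<Rightarrow> real) \<Rightarrow> real \<Rightarrow> 'n \<Rightarrow> 'n \<Rightarrow> 'n \<Rightarrow> real" where
  "Nf a h r i j = (if i = j then 1 else 0) - (if r = j then 1 else 0) - h * (Lent a i j - Lent a r j)"

lemma lap_sum:
  fixes w :: "'n::finite \<Rightarrow> 'b::{real_algebra_1,comm_ring_1}"
  assumes no_self: "\<And>i. a i i = 0"
  shows "(\<Sum>j\<in>UNIV. of_real (Lent a i j) * w j) = Lw a w i"
proof -
  have e: "Lent a i j = (if i = j then (\<Sum>k\<in>UNIV. a i k) else 0) - a i j" for j
    using no_self[of i] by (auto simp: Lent_eq)
  have t: "of_real (Lent a i j) * w j = (if i = j then of_real (\<Sum>k\<in>UNIV. a i k) * w j else 0) - of_real (a i j) * w j" for j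
    unfolding e by (auto simp: of_real_diff left_diff_distrib)
  have "(\<Sum>j\<in>UNIV. of_real (Lent a i j) * w j)
      = (\<Sum>j\<in>UNIV. (if i = j then of_real (\<Sum>k\<in>UNIV. a i k) * w j else 0)) - (\<Sum>j\<in>UNIV. of_real (a i j) * w j)"
    unfolding t by (rule sum_subtractf)
  also have "\<dots> = of_real (\<Sum>k\<in>UNIV. a i k) * w i - (\<Sum>j\<in>UNIV. of_real (a i j) * w j)"
    by (simp add: sum.delta)
  also have "\<dots> = Lw a w i"
    by (simp add: Lw_def algebra_simps sum_subtractf of_real_sum sum_distrib_right sum_distrib_left)
  finally show ?thesis .
qed

lemma Nsum:
  fixes w :: "'n::finite \<Rightarrow> 'b::{real_algebra_1,comm_ring_1}"
  assumes no_self: "\<And>i. a i i = 0"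
  shows "(\<Sum>j\<in>UNIV. of_real (Nf a h r i j) * w j) = (w i - w r) - of_real h * (Lw a w i - Lw a w r)"
proof -
  have t: "of_real (Nf a h r i j) * w j = ((if i = j then w j else 0) - (if r = j then w j else 0))
     - of_real h * (of_real (Lent a i j) * w j - of_real (Lent a r j) * w j)" for j
    by (auto simp: Nf_def of_real_diff algebra_simps)
  have "(\<Sum>j\<in>UNIV. of_real (Nf a h r i j) * w j)
     = ((\<Sum>j\<in>UNIV. (if i = j then w j else 0)) - (\<Sum>j\<in>UNIV. (if r = j then w j else 0)))
       - of_real h * ((\<Sum>j\<in>UNIV. of_real (Lent a i j) * w j) - (\<Sum>j\<in>UNIV. of_real (Lent a r j) * w j))"
    unfolding t by (simp only: sum_subtractf sum_distrib_left[symmetric] right_diff_distrib[symmetric])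
  also have "\<dots> = (w i - w r) - of_real h * (Lw a w i - Lw a w r)"
    by (simp add: lap_sum[OF no_self])
  finally show ?thesis .
qed

lemma lapC_real:
  fixes v :: "'n::finite \<Rightarrow> real"
  assumes nonneg: "\<And>i j. a i j \<ge> 0" and eq: "\<And>i. (\<Sum>j\<in>UNIV. a i j * (v i - v j)) = d"
  shows "d = 0"
proof -
  have "Min (range v) \<in> range v" by (intro Min_in) auto
  then obtain i0 where i0: "v i0 = Min (range v)" by (metis imageE)
  have "Max (range v) \<in> range v" by (intro Max_in) auto
  then obtain i1 where i1: "v i1 = Max (range v)" by (metis imageE)
  have "d \<le> 0"
  proof -
    have "(\<Sum>j\<in>UNIV. a i0 j * (v i0 - v j)) \<le> 0"
      using i0 nonneg by (intro sum_nonpos mult_nonneg_nonpos) auto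
    then show ?thesis using eq[of i0] by simp
  qed
  moreover have "d \<ge> 0"
  proof -
    have "(\<Sum>j\<in>UNIV. a i1 j * (v i1 - v j)) \<ge> 0"
      using i1 nonneg by (intro sum_nonneg mult_nonneg_nonneg) auto
    then show ?thesis using eq[of i1] by simp
  qed
  ultimately show ?thesis by simp
qed

lemma lapD_max:
  fixes v :: "'n::finite \<Rightarrow> real"
  assumes nonneg: "\<And>i j. a i j \<ge> 0" and eq: "\<And>i. (\<Sum>j\<in>UNIV. a i j * (v i - v j)) = 0"
    and T: "T \<subseteq> graph_edges a" and reach: "\<And>i. (r, i) \<in> T\<^sup>*"
  shows "v i \<le> v r"
proof -
  define M where "M = Max (range v)"
  have le: "v j \<le> M" for j unfolding M_def by (intro Max_ge) auto
  have propg: "v j = M" if vi: "v i = M" and aij: "a i j > 0" for i j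
  proof -
    have "(\<Sum>j\<in>UNIV. a i j * (v i - v j)) = 0" by (rule eq)
    moreover have "\<forall>j\<in>UNIV. a i j * (v i - v j) \<ge> 0" using vi le nonneg by auto
    ultimately have "\<forall>j\<in>UNIV. a i j * (v i - v j) = 0"
      using sum_nonneg_eq_0_iff[of UNIV "\<lambda>j. a i j * (v i - v j)"] by auto
    then have "a i j * (v i - v j) = 0" by auto
    then show ?thesis using aij vi by auto
  qed
  have backp: "v z = M \<longrightarrow> v r = M" if "(r, z) \<in> T\<^sup>*" for z
    using that
  proof (induction rule: rtrancl_induct)
    case base then show ?case by simp
  next
    case (step y z)
    then have "a z y > 0" using T by (auto simp: graph_edges_def)
    then show ?case using step propg by blast
  qed
  have "M \<in> range v" unfolding M_def by (intro Max_in) auto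
  then obtain i1 where i1: "v i1 = M" by (metis imageE)
  have "v r = M" using backp[OF reach[of i1]] i1 by simp
  then show ?thesis using le[of i] by simp
qed

lemma lapD_real:
  fixes v :: "'n::finite \<Rightarrow> real"
  assumes nonneg: "\<And>i j. a i j \<ge> 0" and eq: "\<And>i. (\<Sum>j\<in>UNIV. a i j * (v i - v j)) = 0"
    and T: "T \<subseteq> graph_edges a" and reach: "\<And>i. (r, i) \<in> T\<^sup>*"
  shows "v i = v r"
proof -
  have "v i \<le> v r" by (rule lapD_max[OF nonneg eq T reach])
  moreover have "- v i \<le> - v r"
  proof (rule lapD_max[OF nonneg _ T reach])
    fix i show "(\<Sum>j\<in>UNIV. a i j * (- v i - - v j)) = 0"
    proof -
      have "(\<Sum>j\<in>UNIV. a i j * (- v i - - v j)) = (\<Sum>j\<in>UNIV. - (a i j * (v i - v j)))"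
        by (rule sum.cong) (auto simp: algebra_simps)
      also have "\<dots> = 0" using eq[of i] by (simp add: sum_negf)
      finally show ?thesis .
    qed
  qed
  ultimately show ?thesis by simp
qed

lemma Re_Lw: "Re (Lw a w i) = (\<Sum>j\<in>UNIV. a i j * (Re (w i) - Re (w j)))"
  by (simp add: Lw_def Re_sum)

lemma Im_Lw: "Im (Lw a w i) = (\<Sum>j\<in>UNIV. a i j * (Im (w i) - Im (w j)))"
  by (simp add: Lw_def Im_sum)

lemma lapC_cplx:
  fixes w :: "'n::finite \<Rightarrow> complex"
  assumes nonneg: "\<And>i j. a i j \<ge> 0" and eq: "\<And>i. Lw a w i = d"
  shows "d = 0"
proof -
  have "Re d = 0"
  proof (rule lapC_real[of a "\<lambda>i. Re (w i)"])
    fix i show "(\<Sum>j\<in>UNIV. a i j * (Re (w i) - Re (w j))) = Re d"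
      using Re_Lw[of a w i] eq[of i] by simp
  qed (rule nonneg)
  moreover have "Im d = 0"
  proof (rule lapC_real[of a "\<lambda>i. Im (w i)"])
    fix i show "(\<Sum>j\<in>UNIV. a i j * (Im (w i) - Im (w j))) = Im d"
      using Im_Lw[of a w i] eq[of i] by simp
  qed (rule nonneg)
  ultimately show ?thesis by (simp add: complex_eq_iff)
qed

lemma lapD_cplx:
  fixes w :: "'n::finite \<Rightarrow> complex"
  assumes nonneg: "\<And>i j. a i j \<ge> 0" and eq: "\<And>i. Lw a w i = 0"
    and T: "T \<subseteq> graph_edges a" and reach: "\<And>i. (r, i) \<in> T\<^sup>*"
  shows "w i = w r"
proof -
  have "Re (w i) = Re (w r)"
  proof (rule lapD_real[of a "\<lambda>i. Re (w i)", OF nonneg _ T reach])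
    fix i show "(\<Sum>j\<in>UNIV. a i j * (Re (w i) - Re (w j))) = 0"
      using Re_Lw[of a w i] eq[of i] by simp
  qed
  moreover have "Im (w i) = Im (w r)"
  proof (rule lapD_real[of a "\<lambda>i. Im (w i)", OF nonneg _ T reach])
    fix i show "(\<Sum>j\<in>UNIV. a i j * (Im (w i) - Im (w j))) = 0"
      using Im_Lw[of a w i] eq[of i] by simp
  qed
  ultimately show ?thesis by (simp add: complex_eq_iff)
qed


lemma spec_n:
  fixes a :: "'n::finite \<Rightarrow> 'n \<Rightarrow> real" and w :: "'n \<Rightarrow> complex"
  assumes nonneg: "\<And>i j. a i j \<ge> 0" and no_self: "\<And>i. a i i = 0"
    and T: "T \<subseteq> graph_edges a" and reach: "\<And>i. (r, i) \<in> T\<^sup>*"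
    and h_pos: "0 < h"
    and h_bound: "\<And>lam. cmat_eigenvalue (laplacian a) lam \<Longrightarrow> lam \<noteq> 0 \<Longrightarrow>
                    h < 2 * Re lam / (cmod lam)\<^sup>2"
    and wnz: "w i0 \<noteq> 0"
    and ev: "\<And>i. (\<Sum>j\<in>UNIV. of_real (Nf a h r i j) * w j) = \<mu> * w i"
  shows "cmod \<mu> < 1"
proof -
  define c where "c = w r - of_real h * Lw a w r"
  have eq: "w i - of_real h * Lw a w i - c = \<mu> * w i" for i
    using ev[of i] unfolding Nsum[OF no_self] c_def by (simp add: algebra_simps)
  show ?thesis
  proof (cases "\<forall>i. w i = w r")
    case True
    have wc: "w i - w j = 0" for i j using True by (metis diff_self)
    have Lw0: "Lw a w i = 0" for i unfolding Lw_def wc by simp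
    then have "\<mu> * w i0 = 0" using eq[of i0] wc[of i0 r] by (simp add: c_def)
    then have "\<mu> = 0" using wnz by simp
    then show ?thesis by simp
  next
    case False
    then obtain i1 where i1: "w i1 \<noteq> w r" by auto
    have mu1: "\<mu> \<noteq> 1"
    proof
      assume m: "\<mu> = 1"
      have "Lw a w i = - c / of_real h" for i
      proof -
        have "c + of_real h * Lw a w i = 0" using eq[of i] unfolding m by (simp add: algebra_simps)
        then have "of_real h * Lw a w i = - c" by (simp add: add_eq_0_iff)
        then show ?thesis using h_pos by (simp add: field_simps)
      qed
      then have "- c / of_real h = 0" by (rule lapC_cplx[OF nonneg])
      then have "Lw a w i = 0" for i using \<open>\<And>i. Lw a w i = - c / of_real h\<close> by simp
      then have "w i1 = w r" by (rule lapD_cplx[OF nonneg _ T reach])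
      then show False using i1 by simp
    qed
    define w' where "w' i = w i - c / (1 - \<mu>)" for i
    have Lw': "Lw a w' i = Lw a w i" for i by (simp add: Lw_def w'_def)
    define lam where "lam = (1 - \<mu>) / of_real h"
    have lam0: "lam \<noteq> 0" using mu1 h_pos by (simp add: lam_def)
    have eig: "Lw a w' i = lam * w' i" for i
    proof -
      have "(1 - \<mu>) * w i - c = of_real h * Lw a w i" using eq[of i] by (simp add: algebra_simps)
      moreover have "lam * w' i = ((1 - \<mu>) * w i - c) / of_real h"
      proof -
        have m0: "1 - \<mu> \<noteq> 0" using mu1 by simp
        have "lam * w' i = (1 - \<mu>) * (w i - c / (1 - \<mu>)) / of_real h" by (simp add: lam_def w'_def)
        also have "(1 - \<mu>) * (w i - c / (1 - \<mu>)) = (1 - \<mu>) * w i - c"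
          using m0 by (simp add: right_diff_distrib)
        finally show ?thesis .
      qed
      ultimately show ?thesis using h_pos unfolding Lw' by simp
    qed
    have w'nz: "w' i1 \<noteq> 0 \<or> w' r \<noteq> 0" using i1 by (auto simp: w'_def)
    have "cmat_eigenvalue (laplacian a) lam"
      unfolding cmat_eigenvalue_def
    proof (intro exI[of _ "\<chi> i. w' i"] conjI)
      show "(\<chi> i. w' i) \<noteq> 0"
      proof
        assume z: "(\<chi> i. w' i) = 0"
        have "w' k = 0" for k
        proof -
          have "vec_nth (\<chi> i. w' i) k = vec_nth (0 :: complex^'n) k" using z by simp
          then show ?thesis by simp
        qed
        then show False using w'nz by simp
      qed
      show "(\<chi> i j. complex_of_real (vec_nth (vec_nth (laplacian a) i) j)) *v (\<chi> i. w' i) = lam *s (\<chi> i. w' i)"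
        using lap_sum[where a=a and w=w', OF no_self] eig by (simp add: vector_scalar_mult_def matrix_vector_mult_def Lent_def)
    qed
    from h_bound[OF this lam0] have hb: "h < 2 * Re lam / (cmod lam)\<^sup>2" .
    have X0: "(cmod lam)\<^sup>2 > 0" using lam0 by simp
    have hX: "h * (cmod lam)\<^sup>2 < 2 * Re lam" using hb X0 by (simp add: pos_less_divide_eq)
    have mueq: "\<mu> = 1 - of_real h * lam" using h_pos by (simp add: lam_def)
    have "(cmod \<mu>)\<^sup>2 = (1 - h * Re lam)\<^sup>2 + (h * Im lam)\<^sup>2"
      unfolding mueq cmod_power2 by simp
    also have "\<dots> = 1 - 2 * h * Re lam + h * (h * (cmod lam)\<^sup>2)"
      unfolding cmod_power2 by (simp add: power2_eq_square algebra_simps)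
    also have "\<dots> < 1 - 2 * h * Re lam + h * (2 * Re lam)"
      using hX h_pos by simp
    also have "\<dots> = 1 ^ 2" by simp
    finally have "(cmod \<mu>)\<^sup>2 < 1 ^ 2" .
    then show ?thesis by (rule power2_less_imp_less) simp
  qed
qed

theorem proposition4:
  fixes a :: "'n::finite \<Rightarrow> 'n \<Rightarrow> real"
    and h :: real
    and g :: "'n \<Rightarrow> real^'m \<Rightarrow> real"
    and X :: "'n \<Rightarrow> (real^'m) set"
    and sg :: "'n \<Rightarrow> real^'m \<Rightarrow> real^'m"
    and \<alpha> \<beta> :: "nat \<Rightarrow> real"
    and x y nabla \<xi> varphi \<phi> u :: "nat \<Rightarrow> 'n \<Rightarrow> real^'m"
  assumes nonneg: "\<And>i j. a i j \<ge> 0"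
    and no_self: "\<And>i. a i i = 0"
    and tree: "has_spanning_tree a"
    and g_convex: "\<And>i. convex_on UNIV (g i)"
    and g_cont: "\<And>i. continuous_on UNIV (g i)"
    and X_closed: "\<And>i. closed (X i)"
    and X_convex: "\<And>i. convex (X i)"
    and X_nonempty: "\<And>i. X i \<noteq> {}"
    and sg_subgrad: "\<And>i z. is_subgradient (gplus (g i)) z (sg i z)"
    and h_pos: "0 < h"
    and h_bound: "\<And>lam. cmat_eigenvalue (laplacian a) lam \<Longrightarrow> lam \<noteq> 0 \<Longrightarrow>
                    h < 2 * Re lam / (cmod lam)\<^sup>2"
    and y_def: "\<And>t i. y t i = x t i + h *\<^sub>R (\<Sum>j\<in>neighbors a i. a i j *\<^sub>R (x t j - x t i))"
    and nabla_def: "\<And>t i. nabla t i = \<beta> t *\<^sub>R sg i (y t i)"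
    and xi_def: "\<And>t i. \<xi> t i = y t i - nabla t i"
    and varphi_def: "\<And>t i. varphi t i = \<alpha> t *\<^sub>R (\<xi> t i - closest_point (X i) (\<xi> t i))"
    and phi_def: "\<And>t i. \<phi> t i = - nabla t i - varphi t i"
    and u_def: "\<And>t i. u t i = h *\<^sub>R (\<Sum>j\<in>neighbors a i. a i j *\<^sub>R (x t j - x t i)) + \<phi> t i"
    and dyn: "\<And>t i. x (Suc t) i = x t i + u t i"
    and phi_lim: "\<And>i. (\<lambda>t. \<phi> t i) \<longlonglongrightarrow> 0"
  shows "\<forall>i j. (\<lambda>t. norm (x t i - x t j)) \<longlonglongrightarrow> 0"

proof -
  obtain T r where T: "T \<subseteq> graph_edges a" and reach: "\<And>i. (r, i) \<in> T\<^sup>*"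
    using tree unfolding has_spanning_tree_def by blast
  define n where "n = CARD('n)"
  define \<iota> where "\<iota> = from_nat_into (UNIV :: 'n set)"
  have bij: "bij_betw \<iota> {..<n} UNIV"
    using bij_betw_from_nat_into_finite[of "UNIV::'n set"] by (simp add: \<iota>_def n_def)
  define \<kappa> where "\<kappa> = inv_into {..<n} \<iota>"
  have \<kappa>_lt: "\<kappa> i < n" for i
    using bij unfolding \<kappa>_def by (metis bij_betw_def inv_into_into lessThan_iff UNIV_I)
  have \<iota>\<kappa>: "\<iota> (\<kappa> i) = i" for i
    using bij unfolding \<kappa>_def by (metis bij_betw_inv_into_right UNIV_I)
  have \<kappa>\<iota>: "\<kappa> (\<iota> k) = k" if "k < n" for k
    using bij that unfolding \<kappa>_def by (metis bij_betw_inv_into_left lessThan_iff)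
  have n0: "n > 0" by (simp add: n_def)
  have reidx: "(\<Sum>l<n. f (\<iota> l)) = (\<Sum>j\<in>UNIV. f j)" for f :: "'n \<Rightarrow> 'b::comm_monoid_add"
    using sum.reindex_bij_betw[OF bij, of f] .
  define Nm where "Nm = Matrix.mat n n (\<lambda>(k,l). complex_of_real (Nf a h r (\<iota> k) (\<iota> l)))"
  have Nm: "Nm \<in> carrier_mat n n" by (simp add: Nm_def)
  have Nm_mult: "vec_index (Nm *\<^sub>v v) k = (\<Sum>l<n. complex_of_real (Nf a h r (\<iota> k) (\<iota> l)) * vec_index v l)"
    if "v \<in> carrier_vec n" "k < n" for v k
    using that by (simp add: Nm_def scalar_prod_def atLeast0LessThan)
  have sr: "spectral_radius Nm < 1"
  proof -
    obtain \<mu> where mu: "\<mu> \<in> spectrum Nm" "spectral_radius Nm = cmod \<mu>"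
      using spectral_radius_mem_max(1)[OF Nm n0] by auto
    obtain v where v: "v \<in> carrier_vec n" "v \<noteq> 0\<^sub>v n" "Nm *\<^sub>v v = \<mu> \<cdot>\<^sub>v v"
      using mu(1) Nm unfolding spectrum_def eigenvalue_def eigenvector_def by auto
    define w where "w j = vec_index v (\<kappa> j)" for j
    have "\<exists>k<n. vec_index v k \<noteq> 0"
    proof (rule ccontr)
      assume "\<not> (\<exists>k<n. vec_index v k \<noteq> 0)"
      then have "v = 0\<^sub>v n" by (intro eq_vecI) (use v(1) in auto)
      with v(2) show False by simp
    qed
    then obtain k0 where k0: "k0 < n" "vec_index v k0 \<noteq> 0" by auto
    have wnz: "w (\<iota> k0) \<noteq> 0" using k0 \<kappa>\<iota> by (simp add: w_def)
    have ev: "(\<Sum>j\<in>UNIV. of_real (Nf a h r i j) * w j) = \<mu> * w i" for i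
    proof -
      have "vec_index (Nm *\<^sub>v v) (\<kappa> i) = vec_index (\<mu> \<cdot>\<^sub>v v) (\<kappa> i)" using v(3) by simp
      also have "\<dots> = \<mu> * w i" using v(1) \<kappa>_lt by (simp add: w_def)
      also have "vec_index (Nm *\<^sub>v v) (\<kappa> i) = (\<Sum>l<n. complex_of_real (Nf a h r i (\<iota> l)) * w (\<iota> l))"
        using Nm_mult[OF v(1) \<kappa>_lt[of i]] \<iota>\<kappa> \<kappa>\<iota> by (simp add: w_def)
      also have "\<dots> = (\<Sum>j\<in>UNIV. of_real (Nf a h r i j) * w j)"
        by (rule reidx)
      finally show ?thesis by simp
    qed
    have "cmod \<mu> < 1"
      by (rule spec_n[OF nonneg no_self T reach h_pos h_bound wnz ev])
    then show ?thesis using mu(2) by simp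
  qed
  have comp: "(\<lambda>t. vec_nth (x t i) k - vec_nth (x t r) k) \<longlonglongrightarrow> 0" for i k
  proof -
    define z where "z t j = vec_nth (x t j) k" for t j
    define p where "p t j = vec_nth (\<phi> t j) k" for t j
    have plim: "(\<lambda>t. p t j) \<longlonglongrightarrow> 0" for j
      using tendsto_vec_nth[OF phi_lim[of j], of k] by (simp add: p_def)
    have zdyn: "z (Suc t) j = z t j - h * (\<Sum>l\<in>UNIV. a j l * (z t j - z t l)) + p t j" for t j
    proof -
      have "z (Suc t) j = z t j + h * (\<Sum>l\<in>neighbors a j. a j l * (z t l - z t j)) + p t j"
        unfolding z_def p_def dyn u_def by simp
      also have "(\<Sum>l\<in>neighbors a j. a j l * (z t l - z t j)) = (\<Sum>l\<in>UNIV. a j l * (z t l - z t j))"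
      proof (rule sum.mono_neutral_left)
        show "\<forall>l\<in>UNIV - neighbors a j. a j l * (z t l - z t j) = 0"
          using nonneg by (auto simp: neighbors_def) (metis order_neq_le_trans)
      qed auto
      also have "\<dots> = - (\<Sum>l\<in>UNIV. a j l * (z t j - z t l))"
        by (simp add: sum_negf[symmetric] algebra_simps)
      finally show ?thesis by simp
    qed
    define e where "e t j = z t j - z t r" for t j
    have edyn: "e (Suc t) j = (\<Sum>l\<in>UNIV. Nf a h r j l * e t l) + (p t j - p t r)" for t j
    proof -
      have Le: "Lw a (e t) j' = (\<Sum>l\<in>UNIV. a j' l * (z t j' - z t l))" for j'
        by (simp add: Lw_def e_def)
      have "(\<Sum>l\<in>UNIV. Nf a h r j l * e t l) = (e t j - e t r) - h * (Lw a (e t) j - Lw a (e t) r)"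
        using Nsum[where a=a and w="e t" and h=h and r=r and i=j, OF no_self] by simp
      then show ?thesis unfolding Le using zdyn[of t j] zdyn[of t r] by (simp add: e_def right_diff_distrib)
    qed
    define E where "E t = Matrix.vec n (\<lambda>l. complex_of_real (e t (\<iota> l)))" for t
    define F where "F t = Matrix.vec n (\<lambda>l. complex_of_real (p t (\<iota> l) - p t r))" for t
    have Ec: "E t \<in> carrier_vec n" for t by (simp add: E_def)
    have Fc: "F t \<in> carrier_vec n" for t by (simp add: F_def)
    have rec: "E (Suc t) = Nm *\<^sub>v E t + F t" for t
    proof (rule eq_vecI)
      show "dim_vec (E (Suc t)) = dim_vec (Nm *\<^sub>v E t + F t)" using Nm by (simp add: E_def F_def)
      fix l assume "l < dim_vec (Nm *\<^sub>v E t + F t)"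
      then have l: "l < n" using Nm by (simp add: F_def)
      have "vec_index (Nm *\<^sub>v E t + F t) l
          = (\<Sum>m<n. complex_of_real (Nf a h r (\<iota> l) (\<iota> m)) * complex_of_real (e t (\<iota> m)))
            + complex_of_real (p t (\<iota> l) - p t r)"
        using Nm_mult[OF Ec l] l Nm by (simp add: E_def F_def)
      also have "\<dots> = complex_of_real ((\<Sum>m<n. Nf a h r (\<iota> l) (\<iota> m) * e t (\<iota> m)) + (p t (\<iota> l) - p t r))"
        by simp
      also have "(\<Sum>m<n. Nf a h r (\<iota> l) (\<iota> m) * e t (\<iota> m)) = (\<Sum>m\<in>UNIV. Nf a h r (\<iota> l) m * e t m)"
        by (rule reidx)
      finally show "vec_index (E (Suc t)) l = vec_index (Nm *\<^sub>v E t + F t) l"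
        using l edyn[of t "\<iota> l"] by (simp add: E_def)
    qed
    have Flim: "(\<lambda>t. l1n n (F t)) \<longlonglongrightarrow> 0"
    proof -
      have eq: "l1n n (F t) = (\<Sum>l<n. \<bar>p t (\<iota> l) - p t r\<bar>)" for t
        by (simp add: l1n_def F_def flip: of_real_diff)
      have "(\<lambda>t. \<Sum>l<n. \<bar>p t (\<iota> l) - p t r\<bar>) \<longlonglongrightarrow> (\<Sum>l<n. \<bar>0 - 0\<bar>)"
        by (intro tendsto_sum tendsto_rabs tendsto_diff plim)
      then show ?thesis unfolding eq by simp
    qed
    have Elim: "(\<lambda>t. l1n n (E t)) \<longlonglongrightarrow> 0"
      by (rule conv_lemma[OF Nm n0 sr Ec Fc rec Flim])
    have bound: "norm (e t i) \<le> l1n n (E t)" for t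
    proof -
      have "norm (e t i) = cmod (vec_index (E t) (\<kappa> i))" using \<kappa>_lt \<iota>\<kappa> by (simp add: E_def)
      also have "\<dots> \<le> l1n n (E t)" unfolding l1n_def
        by (rule member_le_sum) (use \<kappa>_lt in auto)
      finally show ?thesis .
    qed
    have "(\<lambda>t. e t i) \<longlonglongrightarrow> 0"
      by (rule Lim_null_comparison[OF _ Elim]) (use bound in auto)
    then show ?thesis by (simp add: e_def z_def)
  qed
  show ?thesis
  proof (intro allI)
    fix i j
    have "(\<lambda>t. x t i - x t j) \<longlonglongrightarrow> 0"
    proof (rule vec_tendstoI)
      fix k
      have "(\<lambda>t. (vec_nth (x t i) k - vec_nth (x t r) k) - (vec_nth (x t j) k - vec_nth (x t r) k)) \<longlonglongrightarrow> 0 - 0"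
        by (intro tendsto_diff comp)
      then show "(\<lambda>t. vec_nth (x t i - x t j) k) \<longlonglongrightarrow> vec_nth 0 k" by simp
    qed
    then show "(\<lambda>t. norm (x t i - x t j)) \<longlonglongrightarrow> 0" by (rule tendsto_norm_zero)
  qed
qed

end
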